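(* Let $s,t\in\mathbb{R}$ with $s\ne0$, $s^2+4t>0$, and let $a,b,u\in\mathbb{C}$. The function $$y(x)=\sum_{n=0}^\infty(a\oplus b)^n_{1,u}\frac{x^n}{\{n\}_{s,t}!}$$ satisfies $y(0)=1$ and $(\mathbf{D}_{s,t}y)(x)=a\,y(x)+b\,y(ux)$ at every $x$ for which the series converges at $x$, $ux$, $\varphi_{s,t}x$ and $\varphi'_{s,t}x$.
   Context: $\varphi_{s,t}=\frac{s+\sqrt{s^2+4t}}{2}$, $\varphi'_{s,t}=\frac{s-\sqrt{s^2+4t}}{2}$. Generalized Fibonacci polynomials: $\{0\}_{s,t}=0$, $\{1\}_{s,t}=1$, $\{n+2\}_{s,t}=s\{n+1\}_{s,t}+t\{n\}_{s,t}$; Fibotorial $\{n\}_{s,t}!=\prod_{k=1}^n\{k\}_{s,t}$, $\{0\}_{s,t}!=1$. $(a\oplus b)^0_{1,u}=1$ and $(a\oplus b)^n_{1,u}=\prod_{i=0}^{n-1}(a+bu^i)$ for $n\ge1$. The $(s,t)$-derivative: $(\mathbf{D}_{s,t}f)(x)=\frac{f(\varphi_{s,t}x)-f(\varphi'_{s,t}x)}{(\varphi_{s,t}-\varphi'_{s,t})x}$ for $x\ne0$, $(\mathbf{D}_{s,t}f)(0)=f'(0)$. *)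

theory Defs
  imports "HOL-Analysis.Analysis"
begin

definition phi :: "real \<Rightarrow> real \<Rightarrow> real" where
  "phi s t = (s + sqrt (s^2 + 4*t)) / 2"

definition phi' :: "real \<Rightarrow> real \<Rightarrow> real" where
  "phi' s t = (s - sqrt (s^2 + 4*t)) / 2"

fun fibst :: "real \<Rightarrow> real \<Rightarrow> nat \<Rightarrow> real" where
  "fibst s t 0 = 0"
| "fibst s t (Suc 0) = 1"
| "fibst s t (Suc (Suc n)) = s * fibst s t (Suc n) + t * fibst s t n"

definition fibotorial :: "real \<Rightarrow> real \<Rightarrow> nat \<Rightarrow> real" where
  "fibotorial s t n = (\<Prod>k=1..n. fibst s t k)"

definition qbinom_pow :: "complex \<Rightarrow> complex \<Rightarrow> complex \<Rightarrow> nat \<Rightarrow> complex" where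
  "qbinom_pow a b u n = (\<Prod>i<n. a + b * u^i)"

definition Dst :: "real \<Rightarrow> real \<Rightarrow> (complex \<Rightarrow> complex) \<Rightarrow> complex \<Rightarrow> complex" where
  "Dst s t f x = (if x = 0 then deriv f 0
     else (f (of_real (phi s t) * x) - f (of_real (phi' s t) * x))
          / (of_real (phi s t - phi' s t) * x))"

definition yterm :: "real \<Rightarrow> real \<Rightarrow> complex \<Rightarrow> complex \<Rightarrow> complex \<Rightarrow> complex \<Rightarrow> nat \<Rightarrow> complex" where
  "yterm s t a b u x n = qbinom_pow a b u n * x^n / of_real (fibotorial s t n)"

definition yfun :: "real \<Rightarrow> real \<Rightarrow> complex \<Rightarrow> complex \<Rightarrow> complex \<Rightarrow> complex \<Rightarrow> complex" where
  "yfun s t a b u x = (\<Sum>n. yterm s t a b u x n)"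

end

theory Submission
  imports Defs
begin

lemma phi_sq: assumes "s^2 + 4*t \<ge> 0"
  shows "(phi s t)^2 = s * phi s t + t" "(phi' s t)^2 = s * phi' s t + t"
proof -
  have q: "(sqrt (s^2+4*t))^2 = s^2+4*t" using assms by simp
  show "(phi s t)^2 = s * phi s t + t" unfolding phi_def
    using q by (simp add: power2_eq_square field_simps)
  show "(phi' s t)^2 = s * phi' s t + t" unfolding phi'_def
    using q by (simp add: power2_eq_square field_simps)
qed

lemma pow_rec: fixes x s t :: real assumes "x^2 = s*x+t"
  shows "x^Suc (Suc n) = s*x^Suc n + t*x^n"
proof -
  have "x^Suc (Suc n) = x^2 * x^n" by (simp add: power2_eq_square)
  also have "... = (s*x+t)*x^n" using assms by simp
  finally show ?thesis by (simp add: algebra_simps)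
qed

lemma fib_closed: assumes "s^2 + 4*t \<ge> 0"
  shows "fibst s t n * (phi s t - phi' s t) = phi s t ^ n - phi' s t ^ n
       \<and> fibst s t (Suc n) * (phi s t - phi' s t) = phi s t ^ Suc n - phi' s t ^ Suc n"
proof (induction n)
  case 0 then show ?case by simp
next
  case (Suc n)
  have e1: "phi s t ^ Suc (Suc n) = s * phi s t ^ Suc n + t * phi s t ^ n"
    by (rule pow_rec[OF phi_sq(1)[OF assms]])
  have e2: "phi' s t ^ Suc (Suc n) = s * phi' s t ^ Suc n + t * phi' s t ^ n"
    by (rule pow_rec[OF phi_sq(2)[OF assms]])
  have "fibst s t (Suc (Suc n)) * (phi s t - phi' s t) = s * (fibst s t (Suc n) * (phi s t - phi' s t)) + t * (fibst s t n * (phi s t - phi' s t))"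
    by (simp only: fibst.simps algebra_simps)
  also have "... = s * (phi s t ^ Suc n - phi' s t ^ Suc n) + t * (phi s t ^ n - phi' s t ^ n)"
    using Suc by simp
  also have "... = phi s t ^ Suc (Suc n) - phi' s t ^ Suc (Suc n)"
    unfolding e1 e2 by (simp add: algebra_simps)
  finally show ?case using Suc by blast
qed

lemma fib_nz: assumes "s \<noteq> 0" "s^2 + 4*t > 0" "n \<ge> 1"
  shows "fibst s t n \<noteq> 0"
proof
  assume h: "fibst s t n = 0"
  have "phi s t ^ n = phi' s t ^ n" using conjunct1[OF fib_closed[of s t n]] h assms(2) by simp
  hence "\<bar>phi s t\<bar> ^ n = \<bar>phi' s t\<bar> ^ n" by (metis power_abs)
  hence "\<bar>phi s t\<bar> = \<bar>phi' s t\<bar>" using assms(3)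
    by (meson power_eq_imp_eq_base abs_ge_zero assms(3) less_le_trans zero_less_one)
  moreover have "phi s t \<noteq> phi' s t"
  proof -
    have "sqrt (s^2+4*t) > 0" using assms(2) by simp
    thus ?thesis unfolding phi_def phi'_def by (simp add: field_simps)
  qed
  moreover have "phi s t + phi' s t = s" unfolding phi_def phi'_def by (simp add: field_simps)
  ultimately have "phi s t = - phi' s t" by (metis abs_eq_iff)
  thus False using \<open>phi s t + phi' s t = s\<close> assms(1) by simp
qed

lemma qb_Suc: "qbinom_pow a b u (Suc m) = qbinom_pow a b u m * (a + b*u^m)"
  unfolding qbinom_pow_def by simp

lemma fibt_Suc: "fibotorial s t (Suc m) = fibotorial s t m * fibst s t (Suc m)"
  unfolding fibotorial_def by (simp add: prod.nat_ivl_Suc')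

definition ycoef :: "real \<Rightarrow> real \<Rightarrow> complex \<Rightarrow> complex \<Rightarrow> complex \<Rightarrow> nat \<Rightarrow> complex" where
  "ycoef s t a b u n = qbinom_pow a b u n / of_real (fibotorial s t n)"

lemma yterm_eq: "yterm s t a b u z n = ycoef s t a b u n * z^n"
  unfolding yterm_def ycoef_def by simp

lemma yfun_eq: "yfun s t a b u = (\<lambda>z. \<Sum>n. ycoef s t a b u n * z^n)"
  unfolding yfun_def yterm_eq by simp

lemma yterm0: "yterm s t a b u z 0 = 1"
  unfolding yterm_def qbinom_pow_def fibotorial_def by simp

lemma yfun0: "yfun s t a b u 0 = 1"
proof -
  have "yfun s t a b u 0 = ycoef s t a b u 0" unfolding yfun_eq by (rule powser_zero)
  thus ?thesis using yterm0[of s t a b u 0] by (simp add: yterm_eq)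
qed

lemma key_step:
  assumes "s \<noteq> 0" "s^2 + 4*t > 0"
  shows "yterm s t a b u (of_real (phi s t) * x) (Suc m) - yterm s t a b u (of_real (phi' s t) * x) (Suc m)
     = of_real (phi s t - phi' s t) * x * (a * yterm s t a b u x m + b * yterm s t a b u (u*x) m)"
proof -
  define P where "P = phi s t"
  define P' where "P' = phi' s t"
  define F where "F = fibotorial s t m"
  define f where "f = fibst s t (Suc m)"
  define Q where "Q = qbinom_pow a b u m"
  have fnz: "f \<noteq> 0" unfolding f_def using fib_nz[OF assms] by simp
  have hr: "f * (P - P') = P ^ Suc m - P' ^ Suc m"
    unfolding f_def P_def P'_def using fib_closed[of s t m] assms by simp
  have hc: "complex_of_real P ^ Suc m - complex_of_real P' ^ Suc m = of_real f * of_real (P - P')"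
    using arg_cong[OF hr, of complex_of_real] by simp
  have Fnz: "F \<noteq> 0" unfolding F_def fibotorial_def using fib_nz[OF assms] by simp
  define n where "n = Suc m"
  have hc': "complex_of_real P ^ n - complex_of_real P' ^ n = of_real f * of_real (P - P')"
    unfolding n_def by (rule hc)
  have "yterm s t a b u (of_real P * x) n - yterm s t a b u (of_real P' * x) n
      = qbinom_pow a b u n * x^n * (complex_of_real P ^ n - complex_of_real P' ^ n) / of_real (fibotorial s t n)"
    unfolding yterm_def by (simp add: power_mult_distrib diff_divide_distrib algebra_simps)
  also have "... = qbinom_pow a b u n * x^n * (of_real f * of_real (P - P')) / (of_real F * of_real f)"
    unfolding hc' by (simp add: n_def fibt_Suc F_def f_def)
  also have "... = qbinom_pow a b u n * x^n * of_real (P - P') / of_real F"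
    using fnz Fnz by (simp add: field_simps)
  also have "... = Q * (a + b*u^m) * (x * x^m) * of_real (P - P') / of_real F"
    unfolding n_def qb_Suc Q_def by simp
  also have "... = of_real (P - P') * x * (a * (Q * x^m / of_real F) + b * (Q * (u*x)^m / of_real F))"
    using Fnz by (simp add: power_mult_distrib field_simps)
  also have "... = of_real (P - P') * x * (a * yterm s t a b u x m + b * yterm s t a b u (u*x) m)"
    unfolding yterm_def Q_def F_def by simp
  finally show ?thesis unfolding n_def P_def P'_def .
qed

theorem mainTheorem13:
  fixes s t :: real and a b u :: complex
  assumes "s \<noteq> 0" and "s^2 + 4*t > 0"
  shows "yfun s t a b u 0 = 1 \<and>
    (\<forall>x::complex.
       summable (yterm s t a b u x) \<and>
       summable (yterm s t a b u (u * x)) \<and>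
       summable (yterm s t a b u (of_real (phi s t) * x)) \<and>
       summable (yterm s t a b u (of_real (phi' s t) * x)) \<and>
       (x = 0 \<longrightarrow> (\<exists>r>0. \<forall>z. norm z < r \<longrightarrow> summable (yterm s t a b u z)))
       \<longrightarrow> Dst s t (yfun s t a b u) x = a * yfun s t a b u x + b * yfun s t a b u (u * x))"
proof (intro conjI allI impI)
  show "yfun s t a b u 0 = 1" by (rule yfun0)
next
  fix x :: complex
  assume H: "summable (yterm s t a b u x) \<and>
       summable (yterm s t a b u (u * x)) \<and>
       summable (yterm s t a b u (of_real (phi s t) * x)) \<and>
       summable (yterm s t a b u (of_real (phi' s t) * x)) \<and>
       (x = 0 \<longrightarrow> (\<exists>r>0. \<forall>z. norm z < r \<longrightarrow> summable (yterm s t a b u z)))"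
  let ?y = "yfun s t a b u"
  show "Dst s t ?y x = a * ?y x + b * ?y (u * x)"
  proof (cases "x = 0")
    case True
    then obtain r where r: "r > 0" "\<And>z. norm z < r \<Longrightarrow> summable (yterm s t a b u z)" using H by blast
    define K where "K = complex_of_real (r/2)"
    have "norm K < r" using r unfolding K_def by simp
    hence sK: "summable (\<lambda>n. ycoef s t a b u n * K^n)" using r(2)[of K] unfolding yterm_eq by simp
    have nK: "norm (0::complex) < norm K" using r unfolding K_def by simp
    have D: "DERIV ?y 0 :> (\<Sum>n. diffs (ycoef s t a b u) n * 0^n)"
      unfolding yfun_eq by (rule termdiffs_strong[OF sK nK])
    have "(\<Sum>n. diffs (ycoef s t a b u) n * 0^n) = diffs (ycoef s t a b u) 0" by (rule powser_zero)
    also have "... = a + b" unfolding diffs_def ycoef_def qbinom_pow_def fibotorial_def by simp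
    finally have "deriv ?y 0 = a + b" using DERIV_imp_deriv[OF D] by simp
    thus ?thesis using True yfun0[of s t a b u] unfolding Dst_def by (simp add: algebra_simps)
  next
    case False
    define c where "c = phi s t - phi' s t"
    have cpos: "c > 0" unfolding c_def phi_def phi'_def using assms(2) by simp
    let ?g = "\<lambda>n. yterm s t a b u (of_real (phi s t) * x) n - yterm s t a b u (of_real (phi' s t) * x) n"
    have g1: "?g sums (?y (of_real (phi s t) * x) - ?y (of_real (phi' s t) * x))"
      unfolding yfun_def using H by (intro sums_diff summable_sums) auto
    have "(\<lambda>m. of_real c * x * (a * yterm s t a b u x m + b * yterm s t a b u (u*x) m))
        sums (of_real c * x * (a * ?y x + b * ?y (u*x)))"
      unfolding yfun_def using H by (intro sums_mult sums_add summable_sums) auto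
    hence "(\<lambda>m. ?g (Suc m)) sums (of_real c * x * (a * ?y x + b * ?y (u*x)))"
      using key_step[OF assms] unfolding c_def by simp
    hence g2': "?g sums (of_real c * x * (a * ?y x + b * ?y (u*x)) + ?g 0)"
      by (rule iffD1[OF sums_Suc_iff])
    have g0: "?g 0 = 0" by (simp only: yterm0 diff_self)
    have g2: "?g sums (of_real c * x * (a * ?y x + b * ?y (u*x)))"
      using g2' unfolding g0 by simp
    have eq: "?y (of_real (phi s t) * x) - ?y (of_real (phi' s t) * x) = of_real c * x * (a * ?y x + b * ?y (u*x))"
      using sums_unique2[OF g1 g2] .
    show ?thesis unfolding Dst_def using False cpos eq unfolding c_def[symmetric] by simp
  qed
qed

end
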